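(* Let $G$ be a graph of order $n\ge 9$. If $\tau(G)\le \frac{n}{2}$, then $\beta_p(G)\le n-3$.
   Context: All graphs are finite, simple, undirected and connected. Two vertices $u,v$ are twins if $N(u)\setminus\{v\}=N(v)\setminus\{u\}$; this is an equivalence relation whose classes are called twin classes, and the twin number $\tau(G)$ is the maximum cardinality of a twin class. For a partition $\Pi=\{S_1,\dots,S_k\}$ of $V(G)$, $r(u|\Pi)=(d(u,S_1),\dots,d(u,S_k))$ with $d(u,S)=\min_{w\in S}d(u,w)$; $\Pi$ is locating if $r(u|\Pi)\ne r(v|\Pi)$ for all distinct $u,v$; $\beta_p(G)$ (partition dimension) is the minimum size of a locating partition. *)

theory Defs
  imports Main
begin

definition simple_graph :: "'a set \<Rightarrow> ('a \<Rightarrow> 'a \<Rightarrow> bool) \<Rightarrow> bool" where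
  "simple_graph V E \<longleftrightarrow> finite V \<and> V \<noteq> {} \<and>
     (\<forall>u v. E u v \<longrightarrow> u \<in> V \<and> v \<in> V) \<and>
     (\<forall>u v. E u v \<longrightarrow> E v u) \<and> (\<forall>u. \<not> E u u)"

definition walk_of_length :: "'a set \<Rightarrow> ('a \<Rightarrow> 'a \<Rightarrow> bool) \<Rightarrow> nat \<Rightarrow> 'a \<Rightarrow> 'a \<Rightarrow> bool" where
  "walk_of_length V E k u v \<longleftrightarrow> (\<exists>xs. length xs = Suc k \<and> set xs \<subseteq> V \<and>
     hd xs = u \<and> last xs = v \<and> (\<forall>i < k. E (xs ! i) (xs ! Suc i)))"

definition connected_graph :: "'a set \<Rightarrow> ('a \<Rightarrow> 'a \<Rightarrow> bool) \<Rightarrow> bool" where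
  "connected_graph V E \<longleftrightarrow> (\<forall>u\<in>V. \<forall>v\<in>V. \<exists>k. walk_of_length V E k u v)"

definition gdist :: "'a set \<Rightarrow> ('a \<Rightarrow> 'a \<Rightarrow> bool) \<Rightarrow> 'a \<Rightarrow> 'a \<Rightarrow> nat" where
  "gdist V E u v = (LEAST k. walk_of_length V E k u v)"

definition set_dist :: "'a set \<Rightarrow> ('a \<Rightarrow> 'a \<Rightarrow> bool) \<Rightarrow> 'a \<Rightarrow> 'a set \<Rightarrow> nat" where
  "set_dist V E u S = Min (gdist V E u ` S)"

definition is_partition :: "'a set \<Rightarrow> 'a set set \<Rightarrow> bool" where
  "is_partition V P \<longleftrightarrow> (\<forall>S\<in>P. S \<noteq> {}) \<and> \<Union>P = V \<and>
     (\<forall>S\<in>P. \<forall>T\<in>P. S \<noteq> T \<longrightarrow> S \<inter> T = {})"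

text \<open>r(u|P) \<noteq> r(v|P) for distinct u, v, i.e. some class separates them by distance.\<close>
definition locating_partition :: "'a set \<Rightarrow> ('a \<Rightarrow> 'a \<Rightarrow> bool) \<Rightarrow> 'a set set \<Rightarrow> bool" where
  "locating_partition V E P \<longleftrightarrow> is_partition V P \<and>
     (\<forall>u\<in>V. \<forall>v\<in>V. u \<noteq> v \<longrightarrow> (\<exists>S\<in>P. set_dist V E u S \<noteq> set_dist V E v S))"

definition partition_dim :: "'a set \<Rightarrow> ('a \<Rightarrow> 'a \<Rightarrow> bool) \<Rightarrow> nat" where
  "partition_dim V E = (LEAST k. \<exists>P. locating_partition V E P \<and> card P = k)"

definition nbhd :: "'a set \<Rightarrow> ('a \<Rightarrow> 'a \<Rightarrow> bool) \<Rightarrow> 'a \<Rightarrow> 'a set" where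
  "nbhd V E u = {w \<in> V. E u w}"

definition twins :: "'a set \<Rightarrow> ('a \<Rightarrow> 'a \<Rightarrow> bool) \<Rightarrow> 'a \<Rightarrow> 'a \<Rightarrow> bool" where
  "twins V E u v \<longleftrightarrow> nbhd V E u - {v} = nbhd V E v - {u}"

definition twin_class :: "'a set \<Rightarrow> ('a \<Rightarrow> 'a \<Rightarrow> bool) \<Rightarrow> 'a \<Rightarrow> 'a set" where
  "twin_class V E u = {v \<in> V. twins V E u v}"

definition twin_number :: "'a set \<Rightarrow> ('a \<Rightarrow> 'a \<Rightarrow> bool) \<Rightarrow> nat" where
  "twin_number V E = Max ((\<lambda>u. card (twin_class V E u)) ` V)"

end

theory Submission
  imports Defs
begin

locale cg =
  fixes V :: "'a set" and E :: "'a \<Rightarrow> 'a \<Rightarrow> bool"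
  assumes sg: "simple_graph V E" and cn: "connected_graph V E"
begin

lemma finV: "finite V" using sg by (simp add: simple_graph_def)
lemma EV1: "E u v \<Longrightarrow> u \<in> V" using sg by (simp add: simple_graph_def)
lemma EV2: "E u v \<Longrightarrow> v \<in> V" using sg by (simp add: simple_graph_def)
lemma Esym: "E u v \<Longrightarrow> E v u" using sg by (simp add: simple_graph_def)
lemma Eirr: "\<not> E u u" using sg by (simp add: simple_graph_def)
lemma Esym_iff: "E u v \<longleftrightarrow> E v u" using Esym by blast

lemma walk0: "walk_of_length V E 0 u v \<longleftrightarrow> u \<in> V \<and> u = v"
proof
  assume "walk_of_length V E 0 u v"
  then obtain xs where "length xs = 1" "set xs \<subseteq> V" "hd xs = u" "last xs = v"
    unfolding walk_of_length_def by auto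
  then show "u \<in> V \<and> u = v"
    by (cases xs) auto
next
  assume "u \<in> V \<and> u = v"
  then show "walk_of_length V E 0 u v"
    unfolding walk_of_length_def by (intro exI[of _ "[u]"]) auto
qed

lemma walk_cons:
  assumes "E b u" "walk_of_length V E j u v"
  shows "walk_of_length V E (Suc j) b v"
proof -
  obtain xs where xs: "length xs = Suc j" "set xs \<subseteq> V" "hd xs = u" "last xs = v"
    "\<forall>i<j. E (xs ! i) (xs ! Suc i)"
    using assms(2) unfolding walk_of_length_def by auto
  have ne: "xs \<noteq> []" using xs(1) by auto
  have "length (b # xs) = Suc (Suc j)" using xs by simp
  moreover have "set (b # xs) \<subseteq> V" using xs EV1[OF assms(1)] by auto
  moreover have "hd (b # xs) = b" by simp
  moreover have "last (b # xs) = v" using ne xs by simp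
  moreover have "\<forall>i<Suc j. E ((b # xs) ! i) ((b # xs) ! Suc i)"
  proof (intro allI impI)
    fix i assume "i < Suc j"
    show "E ((b # xs) ! i) ((b # xs) ! Suc i)"
    proof (cases i)
      case 0
      then show ?thesis using assms(1) xs(3) ne by (simp add: hd_conv_nth)
    next
      case (Suc i')
      then show ?thesis using xs(5) \<open>i < Suc j\<close> by simp
    qed
  qed
  ultimately show ?thesis unfolding walk_of_length_def by blast
qed

lemma walk_uncons:
  assumes "walk_of_length V E (Suc j) b v"
  shows "\<exists>u. E b u \<and> walk_of_length V E j u v"
proof -
  obtain xs where xs: "length xs = Suc (Suc j)" "set xs \<subseteq> V" "hd xs = b" "last xs = v"
    "\<forall>i<Suc j. E (xs ! i) (xs ! Suc i)"
    using assms unfolding walk_of_length_def by auto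
  obtain y ys where xy: "xs = y # ys" using xs(1) by (cases xs) auto
  have ys: "length ys = Suc j" using xs(1) xy by simp
  have yb: "y = b" using xs(3) xy by simp
  have ne: "ys \<noteq> []" using ys by auto
  have "E b (hd ys)" using xs(5)[rule_format, of 0] xy yb ne by (simp add: hd_conv_nth)
  moreover have "walk_of_length V E j (hd ys) v"
    unfolding walk_of_length_def
  proof (intro exI[of _ ys] conjI)
    show "length ys = Suc j" by (rule ys)
    show "set ys \<subseteq> V" using xs(2) xy by auto
    show "hd ys = hd ys" by simp
    show "last ys = v" using xs(4) xy ne by simp
    show "\<forall>i<j. E (ys ! i) (ys ! Suc i)"
    proof (intro allI impI)
      fix i assume "i < j"
      then have "Suc i < Suc j" by simp
      then show "E (ys ! i) (ys ! Suc i)" using xs(5) xy by fastforce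
    qed
  qed
  ultimately show ?thesis by blast
qed

lemma walk1: "walk_of_length V E 1 u v \<longleftrightarrow> E u v"
proof
  assume "walk_of_length V E 1 u v"
  then obtain w where "E u w" "walk_of_length V E 0 w v"
    using walk_uncons[of 0 u v] by auto
  then show "E u v" using walk0 by auto
next
  assume "E u v"
  then show "walk_of_length V E 1 u v"
    using walk_cons[of u v 0 v] walk0 EV2 by auto
qed

lemma walk_ex: "u \<in> V \<Longrightarrow> v \<in> V \<Longrightarrow> \<exists>k. walk_of_length V E k u v"
  using cn unfolding connected_graph_def by blast

lemma gdist_walk: "u \<in> V \<Longrightarrow> v \<in> V \<Longrightarrow> walk_of_length V E (gdist V E u v) u v"
  unfolding gdist_def using walk_ex by (rule LeastI_ex)

lemma gdist_le: "walk_of_length V E k u v \<Longrightarrow> gdist V E u v \<le> k"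
  unfolding gdist_def by (rule Least_le)

lemma gdist_self: "u \<in> V \<Longrightarrow> gdist V E u u = 0"
  using gdist_le[of 0 u u] walk0 by auto

lemma gdist_0: "u \<in> V \<Longrightarrow> v \<in> V \<Longrightarrow> gdist V E u v = 0 \<longleftrightarrow> u = v"
  using gdist_walk[of u v] walk0 gdist_self by fastforce

lemma gdist_1: "u \<in> V \<Longrightarrow> v \<in> V \<Longrightarrow> gdist V E u v = 1 \<longleftrightarrow> E u v"
proof
  assume "u \<in> V" "v \<in> V" "gdist V E u v = 1"
  then show "E u v" using gdist_walk[of u v] walk1 by auto
next
  assume a: "u \<in> V" "v \<in> V" "E u v"
  then have "gdist V E u v \<le> 1" using gdist_le walk1 by blast
  moreover have "gdist V E u v \<noteq> 0" using a gdist_0 Eirr by blast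
  ultimately show "gdist V E u v = 1" by simp
qed

lemma gdist_pred:
  assumes "u \<in> V" "v \<in> V" "gdist V E u v = Suc j"
  shows "\<exists>w. E u w \<and> gdist V E w v = j"
proof -
  have "walk_of_length V E (Suc j) u v" using gdist_walk[OF assms(1,2)] assms(3) by simp
  then obtain w where w: "E u w" "walk_of_length V E j w v" using walk_uncons by blast
  have "gdist V E w v \<le> j" using gdist_le[OF w(2)] .
  moreover have "\<not> gdist V E w v < j"
  proof
    assume lt: "gdist V E w v < j"
    have "walk_of_length V E (gdist V E w v) w v" using gdist_walk EV2[OF w(1)] assms(2) by blast
    then have "walk_of_length V E (Suc (gdist V E w v)) u v" using walk_cons w(1) by blast
    then have "gdist V E u v \<le> Suc (gdist V E w v)" by (rule gdist_le)
    then show False using lt assms(3) by simp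
  qed
  ultimately show ?thesis using w(1) by (intro exI[of _ w]) simp
qed

end

definition flat :: "('a \<times> 'a) list \<Rightarrow> 'a list" where
  "flat ps = concat (map (\<lambda>(a,b). [a,b]) ps)"

lemma flat_Cons[simp]: "flat ((a,b) # ps) = a # b # flat ps"
  by (simp add: flat_def)
lemma flat_Nil[simp]: "flat [] = []"
  by (simp add: flat_def)

lemma matching:
  fixes f :: "'a \<Rightarrow> 'b"
  assumes "finite P" "2*k \<le> card P" "\<forall>x\<in>P. card {y\<in>P. f y = f x} + k \<le> card P"
  shows "\<exists>ps. length ps = k \<and> distinct (flat ps) \<and> set (flat ps) \<subseteq> P \<and>
           (\<forall>p\<in>set ps. f (fst p) \<noteq> f (snd p))"
  using assms
proof (induction k arbitrary: P)
  case 0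
  then show ?case by (intro exI[of _ "[]"]) simp
next
  case (Suc k)
  define fib where "fib x = {y\<in>P. f y = f x}" for x
  have finP: "finite P" by fact
  have fibP: "fib x \<subseteq> P" for x unfolding fib_def by auto
  have ffib: "finite (fib x)" for x using fibP finP finite_subset by blast
  have Pne: "P \<noteq> {}" using Suc.prems(2) by auto
  define m where "m = Max ((\<lambda>x. card (fib x)) ` P)"
  have "m \<in> (\<lambda>x. card (fib x)) ` P" unfolding m_def using finP Pne by (intro Max_in) auto
  then obtain a where a: "a \<in> P" "card (fib a) = m" by auto
  have amax: "card (fib x) \<le> card (fib a)" if "x \<in> P" for x
    using a(2) that finP unfolding m_def by (simp add: Max_ge)
  have cfa: "card (fib a) + Suc k \<le> card P" using Suc.prems(3) a(1) unfolding fib_def by blast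
  define Q where "Q = P - fib a"
  have "fib a \<noteq> P" using cfa by auto
  then have Qne: "Q \<noteq> {}" using fibP unfolding Q_def by blast
  have finQ: "finite Q" using finP unfolding Q_def by simp
  define m' where "m' = Max ((\<lambda>x. card (fib x)) ` Q)"
  have "m' \<in> (\<lambda>x. card (fib x)) ` Q" unfolding m'_def using finQ Qne by (intro Max_in) auto
  then obtain b where b: "b \<in> Q" "card (fib b) = m'" by auto
  have bmax: "card (fib x) \<le> card (fib b)" if "x \<in> Q" for x
    using b(2) that finQ unfolding m'_def by (simp add: Max_ge)
  have bP: "b \<in> P" and fab: "f a \<noteq> f b" using b(1) unfolding Q_def fib_def by auto
  have ab: "a \<noteq> b" using fab by auto
  have cfb: "card (fib b) + Suc k \<le> card P" using Suc.prems(3) bP unfolding fib_def by blast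
  have afa: "a \<in> fib a" using a(1) unfolding fib_def by simp
  have bfb: "b \<in> fib b" using bP unfolding fib_def by simp
  define P' where "P' = P - {a,b}"
  have finP': "finite P'" using finP unfolding P'_def by simp
  have cP': "card P' = card P - 2" unfolding P'_def using a(1) bP ab finP by (simp add: card_Diff_subset)
  have c1: "2*k \<le> card P'" using Suc.prems(2) cP' by simp
  have c2: "\<forall>x\<in>P'. card {y\<in>P'. f y = f x} + k \<le> card P'"
  proof
    fix x assume xP': "x \<in> P'"
    then have xP: "x \<in> P" unfolding P'_def by simp
    have eq: "{y\<in>P'. f y = f x} = fib x - {a,b}" unfolding P'_def fib_def by auto
    show "card {y\<in>P'. f y = f x} + k \<le> card P'"
    proof (cases "f x = f a")
      case True
      then have "fib x = fib a" unfolding fib_def by simp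
      moreover have "b \<notin> fib a" using fab unfolding fib_def by auto
      ultimately have "fib x - {a,b} = fib a - {a}" by auto
      then have "card (fib x - {a,b}) = card (fib a) - 1" using afa ffib by simp
      then show ?thesis using eq cfa cP' afa ffib card_gt_0_iff[of "fib a"] by auto
    next
      case False
      note nfa = False
      show ?thesis
      proof (cases "f x = f b")
        case True
        then have "fib x = fib b" unfolding fib_def by simp
        moreover have "a \<notin> fib b" using fab unfolding fib_def by auto
        ultimately have "fib x - {a,b} = fib b - {b}" by auto
        then have "card (fib x - {a,b}) = card (fib b) - 1" using bfb ffib by simp
        then show ?thesis using eq cfb cP' bfb ffib card_gt_0_iff[of "fib b"] by auto
      next
        case False
        have e2: "fib x - {a,b} = fib x" using nfa False unfolding fib_def by auto
        have xQ: "x \<in> Q" using xP nfa unfolding Q_def fib_def by auto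
        have s1: "card (fib x) \<le> card (fib b)" using bmax xQ .
        have s2: "card (fib b) \<le> card (fib a)" using amax bP .
        have disj1: "fib x \<inter> fib a = {}" "fib x \<inter> fib b = {}" "fib a \<inter> fib b = {}"
          using nfa False fab unfolding fib_def by auto
        have "card (fib x \<union> fib a \<union> fib b) = card (fib x) + card (fib a) + card (fib b)"
          using disj1 ffib by (simp add: card_Un_disjoint Int_Un_distrib2)
        moreover have "card (fib x \<union> fib a \<union> fib b) \<le> card P"
          using fibP finP by (simp add: card_mono)
        ultimately have sum: "card (fib x) + card (fib a) + card (fib b) \<le> card P" by simp
        have "card (fib x) + k \<le> card P'"
          using sum s1 s2 cP' Suc.prems(2) by simp
        then show ?thesis using eq e2 by simp
      qed
    qed
  qed
  obtain ps where ps: "length ps = k" "distinct (flat ps)" "set (flat ps) \<subseteq> P'"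
    "\<forall>p\<in>set ps. f (fst p) \<noteq> f (snd p)"
    using Suc.IH[OF finP' c1 c2] by blast
  have "a \<notin> set (flat ps)" "b \<notin> set (flat ps)" using ps(3) unfolding P'_def by auto
  then show ?case
    using ps ab fab a(1) bP unfolding P'_def
    by (intro exI[of _ "(a,b) # ps"]) auto
qed


context cg begin

definition sepw :: "'a set \<Rightarrow> 'a \<Rightarrow> 'a \<Rightarrow> bool" where
  "sepw U a b \<longleftrightarrow> (\<exists>w\<in>V. w \<notin> U \<and> gdist V E a w \<noteq> gdist V E b w)"

definition TP :: bool where
  "TP \<longleftrightarrow> (\<exists>a1 b1 a2 b2 a3 b3. distinct [a1,b1,a2,b2,a3,b3] \<and> {a1,b1,a2,b2,a3,b3} \<subseteq> V \<and>
     sepw {a1,b1,a2,b2,a3,b3} a1 b1 \<and> sepw {a1,b1,a2,b2,a3,b3} a2 b2 \<and>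
     sepw {a1,b1,a2,b2,a3,b3} a3 b3)"

lemma sepw_sym: "sepw U a b \<Longrightarrow> sepw U b a"
  unfolding sepw_def by metis

lemma adj_sep:
  assumes "w \<in> V" "a \<in> V" "b \<in> V" "w \<notin> U" "E w a" "\<not> E w b"
  shows "sepw U a b"
proof -
  have "gdist V E a w = 1" using gdist_1 assms Esym by blast
  moreover have "gdist V E b w \<noteq> 1" using gdist_1 assms Esym by blast
  ultimately show ?thesis unfolding sepw_def using assms by auto
qed

lemma set_dist_single: "set_dist V E u {w} = gdist V E u w"
  by (simp add: set_dist_def)

lemma set_dist_0:
  assumes "finite S" "S \<noteq> {}" "S \<subseteq> V" "u \<in> V"
  shows "set_dist V E u S = 0 \<longleftrightarrow> u \<in> S"
proof
  assume "set_dist V E u S = 0"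
  then have "0 \<in> gdist V E u ` S" unfolding set_dist_def
    using Min_in[of "gdist V E u ` S"] assms by (metis finite_imageI image_is_empty)
  then obtain s where "s \<in> S" "gdist V E u s = 0" by auto
  then show "u \<in> S" using gdist_0 assms by blast
next
  assume "u \<in> S"
  then have "gdist V E u u \<in> gdist V E u ` S" by auto
  then have "Min (gdist V E u ` S) \<le> 0" using gdist_self[OF assms(4)] assms(1)
    by (metis Min_le finite_imageI)
  then show "set_dist V E u S = 0" unfolding set_dist_def by simp
qed

lemma partA0:
  assumes d: "distinct [a1,b1,a2,b2,a3,b3]"
    and sub: "{a1,b1,a2,b2,a3,b3} \<subseteq> V"
    and s1: "sepw {a1,b1,a2,b2,a3,b3} a1 b1" and s2: "sepw {a1,b1,a2,b2,a3,b3} a2 b2"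
    and s3: "sepw {a1,b1,a2,b2,a3,b3} a3 b3"
    and n6: "card V \<ge> 6"
  shows "partition_dim V E \<le> card V - 3"
proof -
  define U where "U = {a1,b1,a2,b2,a3,b3}"
  define Q where "Q = {{a1,b1},{a2,b2},{a3,b3}}"
  define S where "S = (\<lambda>x. {x}) ` (V - U)"
  define P where "P = Q \<union> S"
  have fU: "finite U" unfolding U_def by simp
  have cU: "card U = 6" unfolding U_def using d by simp
  have UV: "U \<subseteq> V" using sub U_def by simp
  have cQ: "card Q = 3" unfolding Q_def using d by (auto simp: doubleton_eq_iff)
  have cS: "card S = card V - 6" unfolding S_def
    using card_image[of "\<lambda>x. {x}" "V - U"] card_Diff_subset[OF fU UV] cU by simp
  have QS: "Q \<inter> S = {}" unfolding Q_def S_def U_def using d by auto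
  have fQ: "finite Q" unfolding Q_def by simp
  have fS: "finite S" unfolding S_def using finV by simp
  have cP: "card P = card V - 3" unfolding P_def using card_Un_disjoint[OF fQ fS QS] cQ cS n6 by simp
  have part: "is_partition V P"
    unfolding is_partition_def P_def Q_def S_def using sub d by (auto simp: U_def)
  have mem: "\<And>T. T \<in> P \<Longrightarrow> finite T \<and> T \<noteq> {} \<and> T \<subseteq> V"
    unfolding P_def Q_def S_def using sub by auto
  have diffcls: "\<exists>T\<in>P. set_dist V E u T \<noteq> set_dist V E v T"
    if "T0 \<in> P" "u \<in> T0" "v \<notin> T0" "u \<in> V" "v \<in> V" for T0 u v
  proof -
    have "set_dist V E u T0 = 0" using set_dist_0 mem[OF that(1)] that by blast
    moreover have "set_dist V E v T0 \<noteq> 0" using set_dist_0 mem[OF that(1)] that by blast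
    ultimately show ?thesis using that(1) by metis
  qed
  have samecls: "\<exists>T\<in>P. set_dist V E u T \<noteq> set_dist V E v T" if sw: "sepw U u v" for u v
  proof -
    obtain w where w: "w \<in> V" "w \<notin> U" "gdist V E u w \<noteq> gdist V E v w"
      using sw unfolding sepw_def by blast
    have wP: "{w} \<in> P" unfolding P_def S_def using w(1,2) by blast
    show ?thesis
      by (rule bexI[OF _ wP]) (simp add: set_dist_single w(3))
  qed
  have loc: "\<exists>T\<in>P. set_dist V E u T \<noteq> set_dist V E v T"
    if "u \<in> V" "v \<in> V" "u \<noteq> v" for u v
  proof (cases "u \<in> U")
    case False
    then have uP: "{u} \<in> P" unfolding P_def S_def using that(1) by blast
    show ?thesis
      by (rule diffcls[OF uP]) (use that in auto)
  next
    case True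
    note uU = True
    show ?thesis
    proof (cases "v \<in> U")
      case False
      then have vP: "{v} \<in> P" unfolding P_def S_def using that(2) by blast
      have "\<exists>T\<in>P. set_dist V E v T \<noteq> set_dist V E u T"
        by (rule diffcls[OF vP]) (use that in auto)
      then show ?thesis by metis
    next
      case True
      have "u \<in> {a1,b1} \<or> u \<in> {a2,b2} \<or> u \<in> {a3,b3}" using uU unfolding U_def by blast
      then obtain T0 where T0: "T0 \<in> Q" "u \<in> T0" unfolding Q_def by blast
      have TP0: "T0 \<in> P" using T0(1) unfolding P_def by blast
      show ?thesis
      proof (cases "v \<in> T0")
        case False
        show ?thesis by (rule diffcls[OF TP0 T0(2) False that(1,2)])
      next
        case True
        have s1': "sepw U a1 b1" "sepw U b1 a1" using s1 sepw_sym unfolding U_def by auto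
        have s2': "sepw U a2 b2" "sepw U b2 a2" using s2 sepw_sym unfolding U_def by auto
        have s3': "sepw U a3 b3" "sepw U b3 a3" using s3 sepw_sym unfolding U_def by auto
        have "T0 = {a1,b1} \<or> T0 = {a2,b2} \<or> T0 = {a3,b3}" using T0(1) unfolding Q_def by blast
        then have "sepw U u v"
        proof (elim disjE)
          assume "T0 = {a1, b1}"
          then have "(u = a1 \<and> v = b1) \<or> (u = b1 \<and> v = a1)" using T0(2) True that(3) by blast
          then show ?thesis using s1' by blast
        next
          assume "T0 = {a2, b2}"
          then have "(u = a2 \<and> v = b2) \<or> (u = b2 \<and> v = a2)" using T0(2) True that(3) by blast
          then show ?thesis using s2' by blast
        next
          assume "T0 = {a3, b3}"
          then have "(u = a3 \<and> v = b3) \<or> (u = b3 \<and> v = a3)" using T0(2) True that(3) by blast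
          then show ?thesis using s3' by blast
        qed
        then show ?thesis by (rule samecls)
      qed
    qed
  qed
  have "locating_partition V E P"
    unfolding locating_partition_def using part loc by blast
  then have "partition_dim V E \<le> card P"
    unfolding partition_dim_def by (intro Least_le) blast
  then show ?thesis using cP by simp
qed

lemma partA:
  assumes TP and n6: "card V \<ge> 6"
  shows "partition_dim V E \<le> card V - 3"
  using assms(1) unfolding TP_def
  apply (elim exE conjE)
  apply (rule partA0)
  using n6 by auto

end

locale cg9 = cg +
  assumes n9: "card V \<ge> 9" and tw: "2 * twin_number V E \<le> card V"
begin

definition nonnbr :: "'a \<Rightarrow> 'a set" where
  "nonnbr u = {w\<in>V. w \<noteq> u \<and> \<not> E u w}"

lemma nbhd_iff: "w \<in> nbhd V E u \<longleftrightarrow> E u w"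
  unfolding nbhd_def using EV2 by auto

lemma nonnbr_iff: "w \<in> nonnbr u \<longleftrightarrow> w \<in> V \<and> w \<noteq> u \<and> \<not> E u w"
  unfolding nonnbr_def by auto

lemma nbhd_sub: "nbhd V E u \<subseteq> V" unfolding nbhd_def by auto
lemma fin_nbhd: "finite (nbhd V E u)" using finV nbhd_sub finite_subset by blast
lemma fin_nonnbr: "finite (nonnbr u)" using finV unfolding nonnbr_def by simp

lemma TP_I:
  assumes "distinct [a1,b1,a2,b2,a3,b3]" "{a1,b1,a2,b2,a3,b3} \<subseteq> V"
    "sepw {a1,b1,a2,b2,a3,b3} a1 b1" "sepw {a1,b1,a2,b2,a3,b3} a2 b2"
    "sepw {a1,b1,a2,b2,a3,b3} a3 b3"
  shows TP
  unfolding TP_def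
  apply (rule exI[of _ a1], rule exI[of _ b1], rule exI[of _ a2], rule exI[of _ b2],
         rule exI[of _ a3], rule exI[of _ b3])
  using assms by blast

lemma TP_adj:
  assumes "distinct [a1,b1,a2,b2,a3,b3]" "{a1,b1,a2,b2,a3,b3} \<subseteq> V"
    "w1 \<in> V" "w2 \<in> V" "w3 \<in> V"
    "w1 \<notin> {a1,b1,a2,b2,a3,b3}" "w2 \<notin> {a1,b1,a2,b2,a3,b3}" "w3 \<notin> {a1,b1,a2,b2,a3,b3}"
    "E w1 a1" "\<not> E w1 b1" "E w2 a2" "\<not> E w2 b2" "E w3 a3" "\<not> E w3 b3"
  shows TP
proof (rule TP_I[OF assms(1,2)])
  show "sepw {a1,b1,a2,b2,a3,b3} a1 b1" by (rule adj_sep) (use assms in auto)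
  show "sepw {a1,b1,a2,b2,a3,b3} a2 b2" by (rule adj_sep) (use assms in auto)
  show "sepw {a1,b1,a2,b2,a3,b3} a3 b3" by (rule adj_sep) (use assms in auto)
qed

lemma TP_ps:
  assumes "length ps = 3" "distinct (flat ps)" "set (flat ps) \<subseteq> V"
    "\<forall>p\<in>set ps. sepw (set (flat ps)) (fst p) (snd p)"
  shows TP
proof -
  obtain p1 p2 p3 where ps: "ps = [p1,p2,p3]"
    using assms(1) by (auto simp: length_Suc_conv numeral_3_eq_3)
  obtain a1 b1 where 1: "p1 = (a1,b1)" by (cases p1)
  obtain a2 b2 where 2: "p2 = (a2,b2)" by (cases p2)
  obtain a3 b3 where 3: "p3 = (a3,b3)" by (cases p3)
  have fl: "flat ps = [a1,b1,a2,b2,a3,b3]" using ps 1 2 3 by simp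
  have st: "set (flat ps) = {a1,b1,a2,b2,a3,b3}" using fl by simp
  show TP
    by (rule TP_I) (use assms fl st ps 1 2 3 in auto)
qed

lemma twin_card:
  assumes "S \<subseteq> V" "u \<in> S" "\<forall>y\<in>S. nbhd V E u - {y} = nbhd V E y - {u}"
  shows "2 * card S \<le> card V"
proof -
  have "S \<subseteq> twin_class V E u" unfolding twin_class_def twins_def using assms by auto
  moreover have "finite (twin_class V E u)" unfolding twin_class_def using finV by simp
  ultimately have "card S \<le> card (twin_class V E u)" by (rule card_mono[rotated])
  also have "\<dots> \<le> twin_number V E" unfolding twin_number_def
    using assms(1,2) finV by (intro Max_ge) auto
  finally show ?thesis using tw by simp
qed

lemma nbhd_ne:
  assumes "v \<in> V"
  shows "nbhd V E v \<noteq> {}"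
proof -
  have "V \<noteq> {v}" using n9 by auto
  then obtain u where u: "u \<in> V" "u \<noteq> v" using assms by blast
  have "gdist V E v u \<noteq> 0" using gdist_0 u assms by blast
  then obtain k where "gdist V E v u = Suc k" using not0_implies_Suc by blast
  then obtain w where "E v w" using gdist_pred assms u by blast
  then show ?thesis using nbhd_iff by blast
qed

definition H1 :: "'a \<Rightarrow> bool" where
  "H1 v \<longleftrightarrow> (\<exists>x\<in>V-{v}. card (V-{v}) < card {y\<in>V-{v}. gdist V E y v = gdist V E x v} + 3)"

lemma stage1:
  assumes "v \<in> V" "\<not> H1 v"
  shows TP
proof -
  let ?P = "V - {v}"
  let ?f = "\<lambda>y. gdist V E y v"
  have fin: "finite ?P" using finV by simp
  have cP: "card ?P = card V - 1" using assms(1) finV by simp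
  have c1: "2*3 \<le> card ?P" using cP n9 by simp
  have c2: "\<forall>x\<in>?P. card {y\<in>?P. ?f y = ?f x} + 3 \<le> card ?P"
    using assms(2) unfolding H1_def by (auto simp: not_less)
  obtain ps where ps: "length ps = 3" "distinct (flat ps)" "set (flat ps) \<subseteq> ?P"
    "\<forall>p\<in>set ps. ?f (fst p) \<noteq> ?f (snd p)"
    using matching[OF fin c1 c2] by blast
  show TP
  proof (rule TP_ps[OF ps(1,2)])
    show "set (flat ps) \<subseteq> V" using ps(3) by auto
    show "\<forall>p\<in>set ps. sepw (set (flat ps)) (fst p) (snd p)"
      using ps(3,4) assms(1) unfolding sepw_def by auto
  qed
qed

lemma layer_facts:
  assumes "v \<in> V" "H1 v"
  obtains j B where "B = {y\<in>V-{v}. gdist V E y v = j}" "card B + 4 > card V" "j \<ge> 1"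
proof -
  obtain x where x: "x \<in> V - {v}" "card (V-{v}) < card {y\<in>V-{v}. gdist V E y v = gdist V E x v} + 3"
    using assms(2) unfolding H1_def by blast
  have "gdist V E x v \<noteq> 0" using gdist_0 x(1) assms(1) by auto
  moreover have "card (V-{v}) = card V - 1" using assms(1) finV by simp
  ultimately show ?thesis using that[of "{y\<in>V-{v}. gdist V E y v = gdist V E x v}" "gdist V E x v"] x n9
    by simp
qed

lemma layer1:
  assumes "v \<in> V"
  shows "{y\<in>V-{v}. gdist V E y v = 1} = nbhd V E v"
  using gdist_1 assms Esym nbhd_iff EV2 Eirr by auto

lemma high_vertex:
  assumes "v \<in> V" "H1 v" "card (nbhd V E v) \<ge> 3"
  shows "card (nonnbr v) \<le> 2"
proof -
  obtain j B where B: "B = {y\<in>V-{v}. gdist V E y v = j}" "card B + 4 > card V" "j \<ge> 1"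
    using layer_facts[OF assms(1,2)] by blast
  have BV: "B \<subseteq> V - {v}" using B(1) by auto
  have cVv: "card (V - {v}) = card V - 1" using assms(1) finV by simp
  have "card ((V-{v}) - B) = card (V-{v}) - card B"
    by (rule card_Diff_subset) (use finV BV finite_subset in auto)
  then have cO: "card ((V - {v}) - B) \<le> 2" using cVv B(2) by simp
  show ?thesis
  proof (cases "j = 1")
    case True
    then have "B = nbhd V E v" using B(1) layer1[OF assms(1)] by simp
    moreover have "nonnbr v = (V - {v}) - nbhd V E v" unfolding nonnbr_def using nbhd_iff by auto
    ultimately show ?thesis using cO by simp
  next
    case False
    have "nbhd V E v \<subseteq> (V - {v}) - B"
      using False B(1) layer1[OF assms(1)] by auto
    then have "card (nbhd V E v) \<le> card ((V - {v}) - B)" using finV by (intro card_mono) auto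
    then have "card (nbhd V E v) \<le> 2" using cO by simp
    then show ?thesis using assms(3) by simp
  qed
qed

end

lemma pick: "finite X \<Longrightarrow> card X < card A \<Longrightarrow> \<exists>x\<in>A. x \<notin> X"
  by (metis card_mono not_le subsetI)

context cg9 begin

context
  fixes v o1 o2 B
  assumes v: "v \<in> V" and o: "o1 \<in> V" "o2 \<in> V" "o1 \<noteq> o2" "o1 \<noteq> v" "o2 \<noteq> v"
    and BV: "B \<subseteq> V" "v \<notin> B" "o1 \<notin> B" "o2 \<notin> B"
    and Vdec: "V = insert v (insert o1 (insert o2 B))"
    and nvB: "\<forall>b\<in>B. \<not> E v b"
    and dst: "\<forall>b\<in>B. gdist V E b v \<noteq> gdist V E o1 v \<and> gdist V E b v \<noteq> gdist V E o2 v"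
    and nv: "nbhd V E v \<subseteq> {o1,o2}"
begin

lemma finB: "finite B" using BV(1) finV finite_subset by blast

lemma cB: "card V = card B + 3"
  using Vdec finB BV o v by simp

lemma cB6: "card B \<ge> 6" using cB n9 by simp

lemma Ia_clique:
  assumes cl: "\<forall>c\<in>B. \<forall>d\<in>B. c \<noteq> d \<longrightarrow> E c d"
  shows TP
proof -
  define P where "P = insert v B"
  define Os where "Os = {o1,o2}"
  define f where "f x = (if x = v then None else Some (nbhd V E x \<inter> Os))" for x
  have finP: "finite P" unfolding P_def using finB by simp
  have cP: "card P = card B + 1" unfolding P_def using finB BV by simp
  have PV: "P \<subseteq> V" unfolding P_def using v BV by simp
  have OsP: "Os \<inter> P = {}" unfolding Os_def P_def using BV o by auto
  have nbB: "nbhd V E y = (B - {y}) \<union> (nbhd V E y \<inter> Os)" if "y \<in> B" for y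
  proof
    show "nbhd V E y \<subseteq> B - {y} \<union> nbhd V E y \<inter> Os"
    proof
      fix w assume w: "w \<in> nbhd V E y"
      then have "w \<in> V" "E y w" using nbhd_iff nbhd_sub by auto
      moreover have "w \<noteq> v" using nvB that \<open>E y w\<close> Esym by blast
      ultimately show "w \<in> B - {y} \<union> nbhd V E y \<inter> Os"
        using Vdec w Eirr unfolding Os_def by auto
    qed
    show "B - {y} \<union> nbhd V E y \<inter> Os \<subseteq> nbhd V E y"
      using cl that by (force simp: nbhd_iff)
  qed
  have c1: "2*3 \<le> card P" using cP cB6 by simp
  have c2: "\<forall>x\<in>P. card {y\<in>P. f y = f x} + 3 \<le> card P"
  proof
    fix x assume xP: "x \<in> P"
    show "card {y\<in>P. f y = f x} + 3 \<le> card P"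
    proof (cases "x = v")
      case True
      then have "{y\<in>P. f y = f x} = {v}" unfolding f_def P_def by auto
      then show ?thesis using cP cB6 by simp
    next
      case False
      then have xB: "x \<in> B" using xP unfolding P_def by simp
      define F where "F = {y\<in>P. f y = f x}"
      have FB: "F \<subseteq> B" unfolding F_def P_def f_def using False by auto
      have tw: "\<forall>y\<in>F. nbhd V E x - {y} = nbhd V E y - {x}"
      proof
        fix y assume yF: "y \<in> F"
        then have yB: "y \<in> B" using FB by auto
        have eqO: "nbhd V E y \<inter> Os = nbhd V E x \<inter> Os"
          using yF False yB BV unfolding F_def f_def by (auto split: if_splits)
        have "nbhd V E x - {y} = (B - {x,y}) \<union> (nbhd V E x \<inter> Os)"
          using nbB[OF xB] BV yB unfolding Os_def by auto
        moreover have "nbhd V E y - {x} = (B - {x,y}) \<union> (nbhd V E y \<inter> Os)"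
          using nbB[OF yB] BV xB unfolding Os_def by auto
        ultimately show "nbhd V E x - {y} = nbhd V E y - {x}" using eqO by simp
      qed
      have "x \<in> F" unfolding F_def using xP by simp
      then have "2 * card F \<le> card V" using twin_card[of F x] FB BV tw by blast
      then show ?thesis using cP cB n9 unfolding F_def by linarith
    qed
  qed
  obtain ps where ps: "length ps = 3" "distinct (flat ps)" "set (flat ps) \<subseteq> P"
    "\<forall>p\<in>set ps. f (fst p) \<noteq> f (snd p)"
    using matching[OF finP c1 c2] by blast
  define U where "U = set (flat ps)"
  have cU: "card U = 6"
  proof -
    have "length (flat ps) = 6" using ps(1) by (auto simp: length_Suc_conv numeral_3_eq_3 flat_def)
    then show ?thesis unfolding U_def using distinct_card[OF ps(2)] by simp
  qed
  have UP: "U \<subseteq> P" using ps(3) U_def by simp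
  have vsep: "sepw U b v" if "b \<in> B" "b \<in> U" "v \<in> U" for b
  proof -
    have "card (U - {v}) = 5" using cU \<open>v \<in> U\<close> U_def by simp
    then have "card (U - {v}) < card B" using cB6 by simp
    then obtain b' where b': "b' \<in> B" "b' \<notin> U - {v}" using pick[of "U - {v}" B] U_def by auto
    have "b' \<notin> U" using b' BV(2) by blast
    moreover have "b' \<noteq> b" using \<open>b' \<notin> U\<close> that(2) by blast
    ultimately show ?thesis
      using adj_sep[of b' b v U] b' that cl nvB Esym BV v by blast
  qed
  show TP
  proof (rule TP_ps[OF ps(1,2)])
    show "set (flat ps) \<subseteq> V" using ps(3) PV by auto
    show "\<forall>p\<in>set ps. sepw (set (flat ps)) (fst p) (snd p)"
    proof
      fix p assume pin: "p \<in> set ps"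
      obtain a b where p: "p = (a,b)" by (cases p)
      have aU: "a \<in> U" and bU: "b \<in> U" using pin p unfolding U_def flat_def by auto
      have aP: "a \<in> P" and bP: "b \<in> P" using aU bU UP by auto
      have fab: "f a \<noteq> f b" using ps(4) pin p by auto
      have "sepw U a b"
      proof (cases "a = v")
        case True
        then have "b \<noteq> v" using fab by auto
        then have "b \<in> B" using bP unfolding P_def by simp
        then show ?thesis using vsep[of b] bU aU True sepw_sym by blast
      next
        case False
        note av = False
        show ?thesis
        proof (cases "b = v")
          case True
          then show ?thesis using vsep[of a] aU bU aP av unfolding P_def by simp
        next
          case False
          have aB: "a \<in> B" and bB: "b \<in> B" using aP bP av False unfolding P_def by auto
          have "nbhd V E a \<inter> Os \<noteq> nbhd V E b \<inter> Os" using fab av False unfolding f_def by simp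
          then obtain oo where oo: "oo \<in> Os" "(E a oo \<and> \<not> E b oo) \<or> (E b oo \<and> \<not> E a oo)"
            using nbhd_iff by blast
          have ooU: "oo \<notin> U" using oo(1) OsP UP by blast
          have ooV: "oo \<in> V" using oo(1) o unfolding Os_def by auto
          from oo(2) show ?thesis
          proof
            assume "E a oo \<and> \<not> E b oo"
            then show ?thesis using adj_sep[of oo a b U] ooU ooV aB bB BV Esym by blast
          next
            assume "E b oo \<and> \<not> E a oo"
            then have "sepw U b a" using adj_sep[of oo b a U] ooU ooV aB bB BV Esym by blast
            then show ?thesis by (rule sepw_sym)
          qed
        qed
      qed
      then show "sepw (set (flat ps)) (fst p) (snd p)" using p U_def by simp
    qed
  qed
qed


lemma Ia_indep:
  assumes ind: "\<forall>c\<in>B. \<forall>d\<in>B. \<not> E c d"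
  shows TP
proof -
  define P where "P = insert v B"
  define Os where "Os = {o1,o2}"
  have finP: "finite P" unfolding P_def using finB by simp
  have cP: "card P = card B + 1" unfolding P_def using finB BV by simp
  have PV: "P \<subseteq> V" unfolding P_def using v BV by simp
  have OsP: "Os \<inter> P = {}" unfolding Os_def P_def using BV o by auto
  have nbO: "nbhd V E x \<subseteq> Os" if "x \<in> P" for x
  proof (cases "x = v")
    case True
    then show ?thesis using nv unfolding Os_def by simp
  next
    case False
    then have xB: "x \<in> B" using that unfolding P_def by simp
    show ?thesis
    proof
      fix w assume w: "w \<in> nbhd V E x"
      then have "w \<in> V" "E x w" using nbhd_iff nbhd_sub by auto
      moreover have "w \<noteq> v" using nvB xB \<open>E x w\<close> Esym by blast
      moreover have "w \<notin> B" using ind xB \<open>E x w\<close> by blast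
      ultimately show "w \<in> Os" using Vdec unfolding Os_def by auto
    qed
  qed
  have c1: "2*3 \<le> card P" using cP cB6 by simp
  have c2: "\<forall>x\<in>P. card {y\<in>P. nbhd V E y = nbhd V E x} + 3 \<le> card P"
  proof
    fix x assume xP: "x \<in> P"
    define F where "F = {y\<in>P. nbhd V E y = nbhd V E x}"
    have FV: "F \<subseteq> V" unfolding F_def using PV by auto
    have tw: "\<forall>y\<in>F. nbhd V E x - {y} = nbhd V E y - {x}"
    proof
      fix y assume yF: "y \<in> F"
      then have eq: "nbhd V E y = nbhd V E x" unfolding F_def by simp
      have "y \<notin> nbhd V E x" using eq nbhd_iff Eirr by metis
      moreover have "x \<notin> nbhd V E y" using eq nbhd_iff Eirr by metis
      ultimately show "nbhd V E x - {y} = nbhd V E y - {x}" using eq by simp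
    qed
    have "x \<in> F" unfolding F_def using xP by simp
    then have "2 * card F \<le> card V" using twin_card[of F x] FV tw by blast
    then show "card {y\<in>P. nbhd V E y = nbhd V E x} + 3 \<le> card P"
      using cP cB n9 unfolding F_def by linarith
  qed
  obtain ps where ps: "length ps = 3" "distinct (flat ps)" "set (flat ps) \<subseteq> P"
    "\<forall>p\<in>set ps. nbhd V E (fst p) \<noteq> nbhd V E (snd p)"
    using matching[OF finP c1 c2] by blast
  define U where "U = set (flat ps)"
  have UP: "U \<subseteq> P" using ps(3) U_def by simp
  show TP
  proof (rule TP_ps[OF ps(1,2)])
    show "set (flat ps) \<subseteq> V" using ps(3) PV by auto
    show "\<forall>p\<in>set ps. sepw (set (flat ps)) (fst p) (snd p)"
    proof
      fix p assume pin: "p \<in> set ps"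
      obtain a b where p: "p = (a,b)" by (cases p)
      have aU: "a \<in> U" and bU: "b \<in> U" using pin p unfolding U_def flat_def by auto
      have aP: "a \<in> P" and bP: "b \<in> P" using aU bU UP by auto
      have fab: "nbhd V E a \<noteq> nbhd V E b" using ps(4) pin p by auto
      then obtain oo where oo: "(oo \<in> nbhd V E a \<and> oo \<notin> nbhd V E b) \<or> (oo \<in> nbhd V E b \<and> oo \<notin> nbhd V E a)"
        by blast
      have ooOs: "oo \<in> Os" using oo nbO aP bP by blast
      have ooU: "oo \<notin> U" using ooOs OsP UP by blast
      have ooV: "oo \<in> V" using ooOs o unfolding Os_def by auto
      have aV: "a \<in> V" and bV: "b \<in> V" using aP bP PV by auto
      have "sepw U a b"
        using oo
      proof
        assume "oo \<in> nbhd V E a \<and> oo \<notin> nbhd V E b"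
        then show ?thesis using adj_sep[of oo a b U] ooU ooV aV bV Esym nbhd_iff by blast
      next
        assume "oo \<in> nbhd V E b \<and> oo \<notin> nbhd V E a"
        then have "sepw U b a" using adj_sep[of oo b a U] ooU ooV aV bV Esym nbhd_iff by blast
        then show ?thesis by (rule sepw_sym)
      qed
      then show "sepw (set (flat ps)) (fst p) (snd p)" using p U_def by simp
    qed
  qed
qed

lemma Ia: TP
proof (cases "\<exists>a b z. a\<in>B \<and> b\<in>B \<and> z\<in>B \<and> a\<noteq>b \<and> a\<noteq>z \<and> b\<noteq>z \<and> E z a \<and> \<not> E z b")
  case True
  then obtain a b z where abz: "a\<in>B" "b\<in>B" "z\<in>B" "a\<noteq>b" "a\<noteq>z" "b\<noteq>z" "E z a" "\<not> E z b"
    by blast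
  have "card {a,b,z} = 3" using abz by simp
  then have "card {a,b,z} < card B" using cB6 by simp
  then obtain b1 where b1: "b1 \<in> B" "b1 \<notin> {a,b,z}" using pick[of "{a,b,z}" B] by auto
  have "card {a,b,z,b1} = 4" using abz b1 by (auto simp: card_insert_if)
  then have "card {a,b,z,b1} < card B" using cB6 by simp
  then obtain b2 where b2: "b2 \<in> B" "b2 \<notin> {a,b,z,b1}" using pick[of "{a,b,z,b1}" B] by auto
  let ?U = "{o1,b1,o2,b2,a,b}"
  show TP
  proof (rule TP_I)
    show "distinct [o1,b1,o2,b2,a,b]" using o BV b1 b2 abz by auto
    show "?U \<subseteq> V" using o BV b1 b2 abz by auto
    show "sepw ?U o1 b1" unfolding sepw_def
      using v o BV b1 b2 abz dst by (intro bexI[of _ v]) auto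
    show "sepw ?U o2 b2" unfolding sepw_def
      using v o BV b1 b2 abz dst by (intro bexI[of _ v]) auto
    show "sepw ?U a b"
      by (rule adj_sep[of z]) (use abz BV b1 b2 o in auto)
  qed
next
  case False
  then have h: "\<And>a b z. a\<in>B \<Longrightarrow> b\<in>B \<Longrightarrow> z\<in>B \<Longrightarrow> a\<noteq>b \<Longrightarrow> a\<noteq>z \<Longrightarrow> b\<noteq>z \<Longrightarrow> E z a \<Longrightarrow> E z b"
    by blast
  show TP
  proof (cases "\<exists>a\<in>B. \<exists>b\<in>B. E a b")
    case True
    then obtain a b where ab: "a \<in> B" "b \<in> B" "E a b" by blast
    have anb: "a \<noteq> b" using ab Eirr by blast
    have ax: "E a x" if "x \<in> B" "x \<noteq> a" for x
    proof (cases "x = b")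
      case True then show ?thesis using ab by simp
    next
      case False
      show ?thesis using h[of b x a] ab that False anb by blast
    qed
    have cl: "\<forall>c\<in>B. \<forall>d\<in>B. c \<noteq> d \<longrightarrow> E c d"
    proof (intro ballI impI)
      fix c d assume cd: "c \<in> B" "d \<in> B" "c \<noteq> d"
      show "E c d"
      proof (cases "c = a")
        case True then show ?thesis using ax cd by simp
      next
        case False
        note ca = False
        show ?thesis
        proof (cases "d = a")
          case True then show ?thesis using ax[of c] cd ca Esym by blast
        next
          case False
          have "E c a" using ax[of c] cd ca Esym by blast
          then show ?thesis using h[of a d c] ab cd ca False by blast
        qed
      qed
    qed
    show TP by (rule Ia_clique[OF cl])
  next
    case False
    then show TP using Ia_indep by blast
  qed
qed

end
end

context cg9 begin

lemma nonnbr_sym: "u \<in> V \<Longrightarrow> w \<in> nonnbr u \<Longrightarrow> u \<in> nonnbr w"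
  unfolding nonnbr_def using Esym by auto

lemma E_of_notnonnbr: "u \<in> V \<Longrightarrow> w \<in> V \<Longrightarrow> w \<noteq> u \<Longrightarrow> w \<notin> nonnbr u \<Longrightarrow> E u w"
  unfolding nonnbr_def by auto

lemma pickV: "finite X \<Longrightarrow> card X < card V \<Longrightarrow> \<exists>x\<in>V. x \<notin> X"
  using pick by blast

lemma config_TP:
  assumes z: "z \<in> V" and nz: "nonnbr z = {a1,a2}" and a12: "a1 \<noteq> a2"
    and c: "c \<in> V" "c \<notin> {z,a1,a2}" and t: "t \<in> nonnbr c" "t \<notin> {a1,a2}"
    and cnn: "card (nonnbr t) \<le> 2"
  shows TP
proof -
  have a1: "a1 \<in> V" "a1 \<noteq> z" "\<not> E z a1" using nz nonnbr_iff by blast+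
  have a2: "a2 \<in> V" "a2 \<noteq> z" "\<not> E z a2" using nz nonnbr_iff by blast+
  have tV: "t \<in> V" "t \<noteq> c" "\<not> E c t" using t nonnbr_iff by blast+
  have tz: "t \<noteq> z"
  proof
    assume "t = z"
    then have "c \<in> nonnbr z" using nonnbr_sym[OF c(1)] t(1) by simp
    then show False using c nz by simp
  qed
  have ctn: "c \<in> nonnbr t" using nonnbr_sym[OF c(1) t(1)] .
  have "card ({z,a1,a2,c,t} \<union> nonnbr t) \<le> card {z,a1,a2,c,t} + card (nonnbr t)"
    by (rule card_Un_le)
  also have "\<dots> \<le> 5 + 2" using cnn card_insert_le
    by (intro add_mono) (auto simp: card_insert_if)
  finally have "card ({z,a1,a2,c,t} \<union> nonnbr t) < card V" using n9 by simp
  then obtain b3 where b3: "b3 \<in> V" "b3 \<notin> {z,a1,a2,c,t} \<union> nonnbr t"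
    using pickV[of "{z,a1,a2,c,t} \<union> nonnbr t"] fin_nonnbr by auto
  have "card {z,a1,a2,c,t,b3} \<le> 6" by (auto simp: card_insert_if)
  then obtain b1 where b1: "b1 \<in> V" "b1 \<notin> {z,a1,a2,c,t,b3}"
    using pickV[of "{z,a1,a2,c,t,b3}"] n9 by auto
  have "card {z,a1,a2,c,t,b3,b1} \<le> 7" by (auto simp: card_insert_if)
  then obtain b2 where b2: "b2 \<in> V" "b2 \<notin> {z,a1,a2,c,t,b3,b1}"
    using pickV[of "{z,a1,a2,c,t,b3,b1}"] n9 by auto
  have Ezb1: "E z b1" using E_of_notnonnbr[OF z b1(1)] b1 nz by auto
  have Ezb2: "E z b2" using E_of_notnonnbr[OF z b2(1)] b2 nz by auto
  have Etb3: "E t b3" using E_of_notnonnbr[OF tV(1) b3(1)] b3 by auto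
  have Etc: "\<not> E t c" using tV(3) Esym by blast
  show TP
    by (rule TP_adj[of b1 a1 b2 a2 b3 c z z t]) (use a1 a2 a12 c t(2) tV tz b1 b2 b3 Ezb1 Ezb2 Etb3 Etc z in auto)
qed

lemma caseII:
  assumes cn2: "\<forall>v\<in>V. card (nonnbr v) \<le> 2"
  shows TP
proof -
  define Uv where "Uv = {v\<in>V. nonnbr v = {}}"
  define D where "D = V - Uv"
  have UvV: "Uv \<subseteq> V" unfolding Uv_def by auto
  have nbUv: "nbhd V E x = V - {x}" if "x \<in> Uv" for x
    using that unfolding Uv_def nonnbr_def nbhd_def using Eirr by auto
  have cUv: "2 * card Uv \<le> card V"
  proof (cases "Uv = {}")
    case True then show ?thesis by simp
  next
    case False
    then obtain u where u: "u \<in> Uv" by blast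
    have "\<forall>y\<in>Uv. nbhd V E u - {y} = nbhd V E y - {u}" using nbUv u by auto
    then show ?thesis using twin_card[OF UvV u] by blast
  qed
  have cD: "card D \<ge> 5"
  proof -
    have "card D = card V - card Uv" unfolding D_def using card_Diff_subset[OF _ UvV] finV finite_subset[OF UvV] by simp
    then show ?thesis using cUv n9 by linarith
  qed
  have Dnn: "nonnbr d \<noteq> {}" if "d \<in> D" for d using that unfolding D_def Uv_def by auto
  have DV: "D \<subseteq> V" unfolding D_def by auto
  have finD: "finite D" using DV finV finite_subset by blast
  show TP
  proof (cases "\<exists>z\<in>V. card (nonnbr z) = 2")
    case True
    then obtain z where z: "z \<in> V" "card (nonnbr z) = 2" by blast
    then obtain a1 a2 where nz: "nonnbr z = {a1,a2}" and a12: "a1 \<noteq> a2"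
      by (meson card_2_iff)
    have a1: "a1 \<in> V" "a1 \<noteq> z" using nz nonnbr_iff by blast+
    have a2: "a2 \<in> V" "a2 \<noteq> z" using nz nonnbr_iff by blast+
    show TP
    proof (cases "\<exists>c t. c \<in> V \<and> c \<notin> {z,a1,a2} \<and> t \<in> nonnbr c \<and> t \<notin> {a1,a2}")
      case True
      then obtain c t where ct: "c \<in> V" "c \<notin> {z,a1,a2}" "t \<in> nonnbr c" "t \<notin> {a1,a2}" by blast
      have "t \<in> V" using ct nonnbr_iff by blast
      then show TP using config_TP[OF z(1) nz a12 ct] cn2 by blast
    next
      case False
      then have sub: "nonnbr c \<subseteq> {a1,a2}" if "c \<in> V" "c \<notin> {z,a1,a2}" for c
        using that by blast
      have "card {z,a1,a2} < card D" using cD by (auto simp: card_insert_if)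
      then obtain c1 where c1: "c1 \<in> D" "c1 \<notin> {z,a1,a2}" using pick[of "{z,a1,a2}" D] by auto
      have "card {z,a1,a2,c1} < card D" using cD by (auto simp: card_insert_if)
      then obtain c2 where c2: "c2 \<in> D" "c2 \<notin> {z,a1,a2,c1}" using pick[of "{z,a1,a2,c1}" D] by auto
      have c1V: "c1 \<in> V" and c2V: "c2 \<in> V" using c1 c2 DV by auto
      have s1: "nonnbr c1 \<subseteq> {a1,a2}" "nonnbr c1 \<noteq> {}" using sub c1V c1 Dnn by auto
      have s2: "nonnbr c2 \<subseteq> {a1,a2}" "nonnbr c2 \<noteq> {}" using sub c2V c2 Dnn by auto
      have zin1: "z \<in> nonnbr a1" using nonnbr_sym[OF z(1)] nz by simp
      have zin2: "z \<in> nonnbr a2" using nonnbr_sym[OF z(1)] nz by simp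
      have not_both: False if "a \<in> {a1,a2}" "a \<in> nonnbr c1" "a \<in> nonnbr c2" for a
      proof -
        have aV: "a \<in> V" using that a1 a2 by auto
        have "{z,c1,c2} \<subseteq> nonnbr a"
          using that nonnbr_sym[OF c1V] nonnbr_sym[OF c2V] zin1 zin2 by auto
        then have "card {z,c1,c2} \<le> card (nonnbr a)" using fin_nonnbr by (rule card_mono[rotated])
        moreover have "card {z,c1,c2} = 3" using c1 c2 by (auto simp: card_insert_if)
        ultimately show False using cn2 aV by fastforce
      qed
      have cases: "(a1 \<in> nonnbr c1 \<and> a2 \<in> nonnbr c2) \<or> (a2 \<in> nonnbr c1 \<and> a1 \<in> nonnbr c2)"
        using s1 s2 not_both by blast
      have conf: TP if ai: "ai \<in> {a1,a2}" "aj \<in> {a1,a2}" "ai \<noteq> aj" "ai \<in> nonnbr c1" "aj \<in> nonnbr c2" for ai aj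
      proof -
        have aiV: "ai \<in> V" using ai a1 a2 by auto
        have "{z,c1} \<subseteq> nonnbr ai" using nonnbr_sym[OF c1V ai(4)] ai zin1 zin2 by auto
        moreover have "card {z,c1} = 2" using c1 by auto
        moreover have "card (nonnbr ai) \<le> 2" using cn2 aiV by blast
        ultimately have eq: "nonnbr ai = {z,c1}"
          using card_seteq[OF fin_nonnbr, of "{z,c1}" ai] by simp
        have zc1: "z \<noteq> c1" using c1 by auto
        have "c2 \<notin> {ai,z,c1}" using c2 ai by auto
        moreover have "aj \<notin> {z,c1}" using ai a1 a2 c1 by auto
        ultimately show TP using config_TP[OF aiV eq zc1 c2V _ ai(5)] cn2 nonnbr_iff ai(5) by blast
      qed
      from cases show TP
      proof
        assume "a1 \<in> nonnbr c1 \<and> a2 \<in> nonnbr c2"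
        then show TP using conf[of a1 a2] a12 by blast
      next
        assume "a2 \<in> nonnbr c1 \<and> a1 \<in> nonnbr c2"
        then show TP using conf[of a2 a1] a12 by blast
      qed
    qed
  next
    case False
    have le1: "card (nonnbr v) \<le> 1" if vV: "v \<in> V" for v
    proof -
      have "card (nonnbr v) \<le> 2" using cn2 vV by blast
      moreover have "card (nonnbr v) \<noteq> 2" using False vV by blast
      ultimately show ?thesis by linarith
    qed
    have mu: "\<exists>m. nonnbr d = {m}" if "d \<in> D" for d
    proof -
      have "card (nonnbr d) \<noteq> 0" using Dnn[OF that] fin_nonnbr by simp
      moreover have "card (nonnbr d) \<le> 1" using le1 DV that by blast
      ultimately have "card (nonnbr d) = 1" by linarith
      then show ?thesis by (rule card_1_singletonE) blast
    qed
    have pair: "\<exists>m. m \<in> D \<and> nonnbr d = {m} \<and> nonnbr m = {d}" if dD: "d \<in> D" for d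
    proof -
      obtain m where m: "nonnbr d = {m}" using mu dD by blast
      have dV: "d \<in> V" using dD DV by auto
      have mV: "m \<in> V" using m nonnbr_iff by blast
      have "d \<in> nonnbr m" using nonnbr_sym[OF dV] m by simp
      moreover have "card (nonnbr m) \<le> 1" using le1 mV by simp
      ultimately have "nonnbr m = {d}" using card_le_Suc0_iff_eq[OF fin_nonnbr, of m] by auto
      moreover have "m \<in> D" unfolding D_def Uv_def using mV calculation by auto
      ultimately show ?thesis using m by blast
    qed
    have "D \<noteq> {}" using cD by auto
    then obtain w1 where w1: "w1 \<in> D" by blast
    obtain m1 where m1: "m1 \<in> D" "nonnbr w1 = {m1}" "nonnbr m1 = {w1}" using pair w1 by blast
    have "card {w1,m1} < card D" using cD by (auto simp: card_insert_if)
    then obtain w2 where w2: "w2 \<in> D" "w2 \<notin> {w1,m1}" using pick[of "{w1,m1}" D] by auto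
    obtain m2 where m2: "m2 \<in> D" "nonnbr w2 = {m2}" "nonnbr m2 = {w2}" using pair w2 by blast
    have "card {w1,m1,w2,m2} < card D" using cD by (auto simp: card_insert_if)
    then obtain w3 where w3: "w3 \<in> D" "w3 \<notin> {w1,m1,w2,m2}" using pick[of "{w1,m1,w2,m2}" D] by auto
    obtain m3 where m3: "m3 \<in> D" "nonnbr w3 = {m3}" "nonnbr m3 = {w3}" using pair w3 by blast
    have ne: "\<And>x y. x \<in> D \<Longrightarrow> y \<in> nonnbr x \<Longrightarrow> y \<noteq> x" using nonnbr_iff by blast
    have d1: "m1 \<noteq> w1" using ne[OF w1] m1 by auto
    have d2: "m2 \<noteq> w2" "m2 \<noteq> w1" "m2 \<noteq> m1" using ne[OF w2(1)] m2 m1 w2 by auto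
    have d3: "m3 \<noteq> w3" "m3 \<noteq> w1" "m3 \<noteq> m1" "m3 \<noteq> w2" "m3 \<noteq> m2"
      using ne[OF w3(1)] m3 m1 m2 w3 by auto
    have "card {w1,m1,w2,m2,w3,m3} \<le> 6" by (auto simp: card_insert_if)
    then obtain e1 where e1: "e1 \<in> V" "e1 \<notin> {w1,m1,w2,m2,w3,m3}"
      using pickV[of "{w1,m1,w2,m2,w3,m3}"] n9 by auto
    have "card {w1,m1,w2,m2,w3,m3,e1} \<le> 7" by (auto simp: card_insert_if)
    then obtain e2 where e2: "e2 \<in> V" "e2 \<notin> {w1,m1,w2,m2,w3,m3,e1}"
      using pickV[of "{w1,m1,w2,m2,w3,m3,e1}"] n9 by auto
    have "card {w1,m1,w2,m2,w3,m3,e1,e2} \<le> 8" by (auto simp: card_insert_if)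
    then obtain e3 where e3: "e3 \<in> V" "e3 \<notin> {w1,m1,w2,m2,w3,m3,e1,e2}"
      using pickV[of "{w1,m1,w2,m2,w3,m3,e1,e2}"] n9 by auto
    have V: "w1 \<in> V" "w2 \<in> V" "w3 \<in> V" "m1 \<in> V" "m2 \<in> V" "m3 \<in> V"
      using w1 w2 w3 m1 m2 m3 DV by auto
    have E1: "E m1 e1" "\<not> E m1 w1" using E_of_notnonnbr[of m1 e1] e1 m1 V nonnbr_iff by auto
    have E2: "E m2 e2" "\<not> E m2 w2" using E_of_notnonnbr[of m2 e2] e2 m2 V nonnbr_iff by auto
    have E3: "E m3 e3" "\<not> E m3 w3" using E_of_notnonnbr[of m3 e3] e3 m3 V nonnbr_iff by auto
    show TP
      by (rule TP_adj[of e1 w1 e2 w2 e3 w3 m1 m2 m3])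
         (use E1 E2 E3 V e1 e2 e3 w2 w3 d1 d2 d3 in auto)
  qed
qed

end

context cg9 begin

lemma caseIb:
  assumes v: "v \<in> V" and x: "x \<in> V" and nvx: "nbhd V E v = {x}"
    and univ: "\<forall>u\<in>V. u \<noteq> x \<longrightarrow> E x u"
    and lowp: "\<forall>u\<in>V. card (nbhd V E u) \<le> 2 \<longrightarrow> nbhd V E u = {x}"
    and high: "\<forall>u\<in>V. card (nbhd V E u) \<ge> 3 \<longrightarrow> card (nonnbr u) \<le> 2"
  shows TP
proof -
  have Evx: "E v x" using nvx nbhd_iff by blast
  have vx: "v \<noteq> x" using Evx Eirr by blast
  define Pd where "Pd = {u\<in>V. nbhd V E u = {x}}"
  have vPd: "v \<in> Pd" unfolding Pd_def using v nvx by simp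
  have xPd: "x \<notin> Pd" unfolding Pd_def using nbhd_iff Eirr by blast
  have PdV: "Pd \<subseteq> V" unfolding Pd_def by auto
  have finPd: "finite Pd" using PdV finV finite_subset by blast
  have cPd: "2 * card Pd \<le> card V"
  proof -
    have "\<forall>y\<in>Pd. nbhd V E v - {y} = nbhd V E y - {v}"
      using nvx xPd vx unfolding Pd_def by auto
    then show ?thesis using twin_card[OF PdV vPd] by blast
  qed
  define B where "B = V - {x} - Pd"
  have BV: "B \<subseteq> V" unfolding B_def by auto
  have finB: "finite B" using BV finV finite_subset by blast
  have cB: "card B = card V - 1 - card Pd"
  proof -
    have "card (V - {x}) = card V - 1" using x finV by simp
    moreover have "Pd \<subseteq> V - {x}" using PdV xPd by auto
    ultimately show ?thesis unfolding B_def using card_Diff_subset[OF finPd] by simp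
  qed
  have hiB: "card (nonnbr w) \<le> 2" if "w \<in> B" for w
  proof -
    have wV: "w \<in> V" using that BV by auto
    have "nbhd V E w \<noteq> {x}" using that unfolding B_def Pd_def by auto
    then have "card (nbhd V E w) \<ge> 3" using lowp wV by fastforce
    then show ?thesis using high wV by blast
  qed
  have Pdnn: "Pd \<subseteq> nonnbr w" if "w \<in> B" for w
  proof
    fix p assume p: "p \<in> Pd"
    have "w \<noteq> x" using that unfolding B_def by simp
    then have "\<not> E p w" using p nbhd_iff unfolding Pd_def by blast
    then show "p \<in> nonnbr w" using p that Esym unfolding Pd_def B_def nonnbr_def by auto
  qed
  have Bne: "B \<noteq> {}" using cB cPd n9 by (intro notI) simp
  then obtain w0 where w0: "w0 \<in> B" by blast
  have cPd2: "card Pd \<le> 2"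
    using card_mono[OF fin_nonnbr Pdnn[OF w0]] hiB[OF w0] by simp
  have Pdv: "Pd = {v}"
  proof (rule ccontr)
    assume "Pd \<noteq> {v}"
    then obtain p where p: "p \<in> Pd" "p \<noteq> v" using vPd by blast
    have nnB: "nonnbr w = {v,p}" if "w \<in> B" for w
    proof -
      have "{v,p} \<subseteq> nonnbr w" using Pdnn[OF that] vPd p by auto
      moreover have "card {v,p} = 2" using p by simp
      ultimately show ?thesis using hiB[OF that] card_seteq[OF fin_nonnbr, of "{v,p}" w] by simp
    qed
    have nbB: "nbhd V E w = V - {w,v,p}" if "w \<in> B" for w
    proof -
      have wV: "w \<in> V" using that BV by auto
      have "u \<in> nbhd V E w \<longleftrightarrow> u \<in> V - {w,v,p}" for u
      proof
        assume "u \<in> nbhd V E w"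
        then have Ewu: "E w u" using nbhd_iff by blast
        then have uV: "u \<in> V" "u \<noteq> w" using EV2 Eirr by blast+
        have "u \<notin> nonnbr w" using Ewu nonnbr_iff by blast
        then show "u \<in> V - {w,v,p}" using nnB[OF that] uV by auto
      next
        assume u: "u \<in> V - {w,v,p}"
        then have "u \<notin> nonnbr w" using nnB[OF that] by auto
        then show "u \<in> nbhd V E w" using E_of_notnonnbr[of w u] u wV nbhd_iff by auto
      qed
      then show ?thesis by blast
    qed
    have "\<forall>y\<in>B. nbhd V E w0 - {y} = nbhd V E y - {w0}" using nbB w0 by auto
    then have "2 * card B \<le> card V" using twin_card[OF BV w0] by blast
    then show False using cB cPd2 n9 by linarith
  qed
  have Bxv: "B = V - {x,v}" unfolding B_def Pdv by auto
  have cB2: "card B = card V - 2" using cB Pdv by simp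
  have vB: "v \<notin> B" and xB: "x \<notin> B" using Bxv by auto
  have nnB1: "card (nonnbr w \<inter> B) \<le> 1" if "w \<in> B" for w
  proof -
    have "v \<in> nonnbr w" using Pdnn[OF that] vPd by auto
    then have "insert v (nonnbr w \<inter> B) \<subseteq> nonnbr w" by auto
    then have "card (insert v (nonnbr w \<inter> B)) \<le> 2" using hiB[OF that] card_mono[OF fin_nonnbr] by (meson le_trans)
    moreover have "card (insert v (nonnbr w \<inter> B)) = Suc (card (nonnbr w \<inter> B))"
      using vB fin_nonnbr by simp
    ultimately show ?thesis by simp
  qed
  define Full where "Full = {w\<in>B. nonnbr w \<inter> B = {}}"
  have FullB: "Full \<subseteq> B" unfolding Full_def by auto
  have nbFull: "nbhd V E w = V - {w,v}" if "w \<in> Full" for w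
  proof -
    have wB: "w \<in> B" using that FullB by auto
    have "v \<in> nonnbr w" using Pdnn[OF wB] vPd by auto
    have "u \<in> nbhd V E w \<longleftrightarrow> u \<in> V - {w,v}" for u
    proof
      assume "u \<in> nbhd V E w"
      then show "u \<in> V - {w,v}" using \<open>v \<in> nonnbr w\<close> nbhd_iff nonnbr_iff EV2 Eirr by blast
    next
      assume u: "u \<in> V - {w,v}"
      show "u \<in> nbhd V E w"
      proof (cases "u = x")
        case True
        then show ?thesis using univ wB BV xB Esym nbhd_iff by (metis subsetD)
      next
        case False
        then have "u \<in> B" using u Bxv by auto
        then have "u \<notin> nonnbr w" using that unfolding Full_def by auto
        then show ?thesis using u nonnbr_iff nbhd_iff by blast
      qed
    qed
    then show ?thesis by blast
  qed
  have cFull: "2 * card Full \<le> card V"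
  proof (cases "Full = {}")
    case True then show ?thesis by simp
  next
    case False
    then obtain f0 where f0: "f0 \<in> Full" by blast
    have "\<forall>y\<in>Full. nbhd V E f0 - {y} = nbhd V E y - {f0}" using nbFull f0 by auto
    then show ?thesis using twin_card[OF _ f0] FullB BV by blast
  qed
  define Ns where "Ns = B - Full"
  have finFull: "finite Full" using FullB finB finite_subset by blast
  have cNs: "card Ns \<ge> 3"
  proof -
    have "card Ns = card B - card Full" unfolding Ns_def using card_Diff_subset[OF finFull FullB] .
    then show ?thesis using cB2 cFull n9 by linarith
  qed
  have NsB: "Ns \<subseteq> B" unfolding Ns_def by auto
  have finNs: "finite Ns" using NsB finB finite_subset by blast
  have mate: "\<exists>m. m \<in> Ns \<and> nonnbr w \<inter> B = {m} \<and> nonnbr m \<inter> B = {w}" if wN: "w \<in> Ns" for w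
  proof -
    have wB: "w \<in> B" using wN NsB by auto
    have "nonnbr w \<inter> B \<noteq> {}" using wN unfolding Ns_def Full_def by auto
    moreover have "card (nonnbr w \<inter> B) \<le> 1" using nnB1[OF wB] .
    moreover have "finite (nonnbr w \<inter> B)" using fin_nonnbr by simp
    ultimately obtain m where m: "nonnbr w \<inter> B = {m}"
      by (metis card_0_eq card_1_singletonE le_antisym less_one not_less)
    have mB: "m \<in> B" and mV: "m \<in> V" using m BV by auto
    have wV: "w \<in> V" using wB BV by auto
    have "w \<in> nonnbr m" using nonnbr_sym[OF wV] m by auto
    then have "w \<in> nonnbr m \<inter> B" using wB by simp
    moreover have "card (nonnbr m \<inter> B) \<le> 1" using nnB1[OF mB] .
    ultimately have mm: "nonnbr m \<inter> B = {w}"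
      using card_le_Suc0_iff_eq[of "nonnbr m \<inter> B"] fin_nonnbr by auto
    then have "m \<in> Ns" using mB unfolding Ns_def Full_def by auto
    then show ?thesis using m mm by blast
  qed
  have "Ns \<noteq> {}" using cNs by auto
  then obtain w1 where w1: "w1 \<in> Ns" by blast
  obtain m1 where m1: "m1 \<in> Ns" "nonnbr w1 \<inter> B = {m1}" "nonnbr m1 \<inter> B = {w1}"
    using mate[OF w1] by blast
  have "card {w1,m1} < card Ns" using cNs by (auto simp: card_insert_if)
  then obtain w2 where w2: "w2 \<in> Ns" "w2 \<notin> {w1,m1}" using pick[of "{w1,m1}" Ns] by auto
  obtain m2 where m2: "m2 \<in> Ns" "nonnbr w2 \<inter> B = {m2}" "nonnbr m2 \<inter> B = {w2}"
    using mate[OF w2(1)] by blast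
  have nself: "y \<noteq> w" if "y \<in> nonnbr w" for y w using that nonnbr_iff by blast
  have d1: "m1 \<noteq> w1" using nself[of m1 w1] m1 by auto
  have d2: "m2 \<noteq> w2" using nself[of m2 w2] m2 by auto
  have d3: "m2 \<noteq> w1" using m1 m2 w2 by auto
  have d4: "m2 \<noteq> m1" using m1 m2 w2 by auto
  have cB7: "card B \<ge> 7" using cB2 n9 by simp
  have "card {w1,m1,w2,m2} < card B" using cB7 by (auto simp: card_insert_if)
  then obtain e1 where e1: "e1 \<in> B" "e1 \<notin> {w1,m1,w2,m2}" using pick[of "{w1,m1,w2,m2}" B] by auto
  have "card {w1,m1,w2,m2,e1} < card B" using cB7 by (auto simp: card_insert_if)
  then obtain e2 where e2: "e2 \<in> B" "e2 \<notin> {w1,m1,w2,m2,e1}" using pick[of "{w1,m1,w2,m2,e1}" B] by auto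
  have "card {w1,m1,w2,m2,e1,e2} < card B" using cB7 by (auto simp: card_insert_if)
  then obtain e3 where e3: "e3 \<in> B" "e3 \<notin> {w1,m1,w2,m2,e1,e2}" using pick[of "{w1,m1,w2,m2,e1,e2}" B] by auto
  have inB: "w1 \<in> B" "w2 \<in> B" "m1 \<in> B" "m2 \<in> B" using w1 w2 m1 m2 NsB by auto
  have inV: "w1 \<in> V" "w2 \<in> V" "m1 \<in> V" "m2 \<in> V" "e1 \<in> V" "e2 \<in> V" "e3 \<in> V"
    using inB e1 e2 e3 BV by auto
  have Ev1: "\<not> E v e1" using nvx nbhd_iff e1 xB by (metis singletonD)
  have Em1: "E m1 e2"
  proof -
    have "e2 \<notin> nonnbr m1" using m1(3) e2 by auto
    then show ?thesis using E_of_notnonnbr[of m1 e2] inV e2 by auto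
  qed
  have Em1': "\<not> E m1 w1" using m1(3) nonnbr_iff by auto
  have Em2: "E m2 e3"
  proof -
    have "e3 \<notin> nonnbr m2" using m2(3) e3 by auto
    then show ?thesis using E_of_notnonnbr[of m2 e3] inV e3 by auto
  qed
  have Em2': "\<not> E m2 w2" using m2(3) nonnbr_iff by auto
  show TP
    by (rule TP_adj[of x e1 e2 w1 e3 w2 v m1 m2])
       (use Evx Ev1 Em1 Em1' Em2 Em2' inV inB x v vB xB vx e1 e2 e3 w2 d1 d2 d3 d4 in auto)
qed

end

context cg9 begin

lemma low_vertex:
  assumes v: "v \<in> V" "H1 v" "card (nbhd V E v) \<le> 2" and nTP: "\<not> TP"
  shows "\<exists>x\<in>V. nbhd V E v = {x} \<and> (\<forall>u\<in>V. u \<noteq> x \<longrightarrow> E x u)"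
proof -
  obtain j B where B: "B = {y\<in>V-{v}. gdist V E y v = j}" "card B + 4 > card V" "j \<ge> 1"
    using layer_facts[OF v(1,2)] by blast
  have BV: "B \<subseteq> V - {v}" using B(1) by auto
  have j1: "j \<noteq> 1"
  proof
    assume "j = 1"
    then have "B = nbhd V E v" using B(1) layer1[OF v(1)] by simp
    then show False using B(2) v(3) n9 by simp
  qed
  define Os where "Os = V - {v} - B"
  have cVv: "card (V - {v}) = card V - 1" using v(1) finV by simp
  have "card Os = card (V-{v}) - card B"
    unfolding Os_def by (rule card_Diff_subset) (use finV BV finite_subset in auto)
  then have cO: "card Os \<le> 2" using cVv B(2) by simp
  have finO: "finite Os" unfolding Os_def using finV by simp
  have nvO: "nbhd V E v \<subseteq> Os"
  proof
    fix y assume y: "y \<in> nbhd V E v"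
    then have Evy: "E v y" using nbhd_iff by blast
    then have yV: "y \<in> V" "y \<noteq> v" using EV2 Eirr by blast+
    have "gdist V E y v = 1" using gdist_1 yV v(1) Evy Esym by blast
    then show "y \<in> Os" unfolding Os_def using B(1) j1 yV by auto
  qed
  have One: "Os \<noteq> {}" using nvO nbhd_ne[OF v(1)] by blast
  have nvB: "\<forall>b\<in>B. \<not> E v b"
  proof
    fix b assume b: "b \<in> B"
    then have "gdist V E b v = j" "b \<in> V" using B(1) by auto
    then show "\<not> E v b" using gdist_1[of b v] v(1) j1 Esym by auto
  qed
  have OsV: "Os \<subseteq> V" "v \<notin> Os" "Os \<inter> B = {}" unfolding Os_def by auto
  have Vdec: "V = insert v (Os \<union> B)" unfolding Os_def using v(1) BV by auto
  show ?thesis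
  proof (cases "card Os = 2")
    case True
    then obtain o1 o2 where o12: "Os = {o1,o2}" "o1 \<noteq> o2" by (meson card_2_iff)
    have "TP"
    proof (rule Ia[of v o1 o2 B])
      show "v \<in> V" by (rule v(1))
      show "o1 \<in> V" "o2 \<in> V" "o1 \<noteq> o2" "o1 \<noteq> v" "o2 \<noteq> v" using o12 OsV by auto
      show "B \<subseteq> V" "v \<notin> B" "o1 \<notin> B" "o2 \<notin> B" using BV o12 OsV by auto
      show "V = insert v (insert o1 (insert o2 B))" using Vdec o12 by auto
      show "\<forall>b\<in>B. \<not> E v b" by (rule nvB)
      have oO: "o1 \<in> Os" "o2 \<in> Os" using o12 by auto
      have og: "gdist V E o1 v \<noteq> j" "gdist V E o2 v \<noteq> j"
      proof -
        have "o1 \<in> V - {v}" "o1 \<notin> B" "o2 \<in> V - {v}" "o2 \<notin> B" using oO unfolding Os_def by auto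
        then show "gdist V E o1 v \<noteq> j" "gdist V E o2 v \<noteq> j" using B(1) by auto
      qed
      show "\<forall>b\<in>B. gdist V E b v \<noteq> gdist V E o1 v \<and> gdist V E b v \<noteq> gdist V E o2 v"
      proof
        fix b assume "b \<in> B"
        then have "gdist V E b v = j" using B(1) by simp
        then show "gdist V E b v \<noteq> gdist V E o1 v \<and> gdist V E b v \<noteq> gdist V E o2 v" using og by simp
      qed
      show "nbhd V E v \<subseteq> {o1,o2}" using nvO o12 by simp
    qed
    then show ?thesis using nTP by simp
  next
    case False
    have "card Os \<noteq> 0" using One finO by simp
    then have "card Os = 1" using cO False by linarith
    then obtain x where x: "Os = {x}" by (meson card_1_singletonE)
    have nvx: "nbhd V E v = {x}" using nvO nbhd_ne[OF v(1)] x by auto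
    have xV: "x \<in> V" using x OsV by auto
    have univ: "\<forall>u\<in>V. u \<noteq> x \<longrightarrow> E x u"
    proof (intro ballI impI)
      fix u assume u: "u \<in> V" "u \<noteq> x"
      show "E x u"
      proof (cases "u = v")
        case True
        then show ?thesis using nvx nbhd_iff Esym by blast
      next
        case False
        then have uB: "u \<in> B" using u Vdec x by auto
        then have gu: "gdist V E u v = j" using B(1) by auto
        obtain j' where j': "j = Suc j'" using B(3) not0_implies_Suc by force
        obtain w where w: "E u w" "gdist V E w v = j'" using gdist_pred[OF u(1) v(1)] gu j' by blast
        have wV: "w \<in> V" using w EV2 by blast
        have "j' \<noteq> 0" using j' j1 B(3) by simp
        then have "w \<noteq> v" using w gdist_self[OF v(1)] by auto
        moreover have "w \<notin> B" using w(2) j' B(1) by auto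
        ultimately have "w \<in> Os" using wV unfolding Os_def by auto
        then have "w = x" using x by simp
        then show ?thesis using w Esym by blast
      qed
    qed
    show ?thesis using xV nvx univ by blast
  qed
qed

lemma main_TP: TP
proof (rule ccontr)
  assume nTP: "\<not> TP"
  have H1all: "H1 v" if "v \<in> V" for v
    using stage1[OF that] nTP by blast
  have high: "\<forall>u\<in>V. card (nbhd V E u) \<ge> 3 \<longrightarrow> card (nonnbr u) \<le> 2"
    using high_vertex H1all by blast
  show False
  proof (cases "\<exists>v\<in>V. card (nbhd V E v) \<le> 2")
    case True
    then obtain v where v: "v \<in> V" "card (nbhd V E v) \<le> 2" by blast
    obtain x where x: "x \<in> V" "nbhd V E v = {x}" "\<forall>u\<in>V. u \<noteq> x \<longrightarrow> E x u"
      using low_vertex[OF v(1) H1all[OF v(1)] v(2) nTP] by blast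
    have nbx: "nbhd V E x = V - {x}" using x(3) nbhd_iff EV2 Eirr by auto
    have cx: "card (nbhd V E x) \<ge> 3" using nbx n9 x(1) finV by simp
    have lowp: "\<forall>u\<in>V. card (nbhd V E u) \<le> 2 \<longrightarrow> nbhd V E u = {x}"
    proof (intro ballI impI)
      fix u assume u: "u \<in> V" "card (nbhd V E u) \<le> 2"
      obtain y where y: "y \<in> V" "nbhd V E u = {y}" "\<forall>w\<in>V. w \<noteq> y \<longrightarrow> E y w"
        using low_vertex[OF u(1) H1all[OF u(1)] u(2) nTP] by blast
      have "u \<noteq> x" using u(2) cx by auto
      then have "E u x" using x(3) u(1) Esym by blast
      then have "x \<in> nbhd V E u" using nbhd_iff by blast
      then show "nbhd V E u = {x}" using y(2) by simp
    qed
    have "TP" by (rule caseIb[OF v(1) x(1) x(2) x(3) lowp high])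
    then show False using nTP by simp
  next
    case False
    then have "\<forall>u\<in>V. card (nonnbr u) \<le> 2" using high by auto
    then have TP by (rule caseII)
    then show False using nTP by simp
  qed
qed

end

theorem theorem14:
  fixes V :: "'a set" and E :: "'a \<Rightarrow> 'a \<Rightarrow> bool"
  assumes "simple_graph V E" and "connected_graph V E"
    and "card V \<ge> 9"
    and "2 * twin_number V E \<le> card V"
  shows "partition_dim V E \<le> card V - 3"
proof -
  interpret cg9 V E
    by unfold_locales (use assms in auto)
  show ?thesis using partA[OF main_TP] assms(3) by simp
qed


end
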